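(* Let $m\ge1$ be an integer and $p=1/2^m$. Let $f:\{0,1\}^n\to\mathbb{R}$ and $g=\mathrm{Red}(f):\{0,1\}^{mn}\to\mathbb{R}$ as defined below. For $S\subseteq\{1,\dots,mn\}$ let $S_i=S\cap\{(i-1)m+1,\dots,im\}$ for $i=1,\dots,n$, let $S'=\{i:|S_i|>0\}\subseteq\{1,\dots,n\}$ and $k=|S'|$. Then \[ \hat g(S)=\Big(-\sqrt{\tfrac{p}{1-p}}\Big)^k(-1)^{|S|}\hat f(S'), \] where $\hat g$ is w.r.t. the uniform measure on $\{0,1\}^{mn}$ and $\hat f$ is w.r.t. $\mu_p$.
   Context: For $0<p<1$, $\mu_p$ denotes the product measure on $\{0,1\}^n$ with $\mu_p(x)=p^{\sum_i x_i}(1-p)^{n-\sum_i x_i}$; $\mu_{1/2}$ is the uniform measure. Elements of $\{0,1\}^n$ are identified with subsets of $\{1,\dots,n\}$. For $S,T\subseteq\{1,\dots,n\}$, $u_S(T)=\big(-\sqrt{(1-p)/p}\big)^{|S\cap T|}\big(\sqrt{p/(1-p)}\big)^{|S\setminus T|}$ (for $p=1/2$, $u_S(T)=(-1)^{|S\cap T|}$); these form an orthonormal basis of $L^2(\mu_p)$ and $\hat f(S)=\mathbb{E}_{\mu_p}[fu_S]$ is the Fourier–Walsh coefficient, so $f=\sum_S\hat f(S)u_S$. Reduction for $p=t/2^m$ (here $t=1$): write $y\in\{0,1\}^{mn}$ as $(y^1,\dots,y^n)$, $y^i=(y^i_1,\dots,y^i_m)\in\{0,1\}^m$, where $y^i_j$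 is coordinate $(i-1)m+j$ of $y$. Let $\mathrm{Bin}(y^i)=\sum_{j=0}^{m-1}2^jy^i_{m-j}$, $h(y^i)=1$ if $\mathrm{Bin}(y^i)\ge 2^m-t$ and $0$ otherwise, and $\mathrm{Red}(f)=g$, $g(y)=f(h(y^1),\dots,h(y^n))$. *)

theory Defs
  imports Complex_Main
begin

text \<open>Points of the cube {0,1}^n are identified with subsets of {1..n}.\<close>

definition mu :: "real \<Rightarrow> nat \<Rightarrow> nat set \<Rightarrow> real" where
  "mu p n T = p ^ card T * (1 - p) ^ (n - card T)"

definition walsh :: "real \<Rightarrow> nat set \<Rightarrow> nat set \<Rightarrow> real" where
  "walsh p S T = (- sqrt ((1 - p) / p)) ^ card (S \<inter> T) * (sqrt (p / (1 - p))) ^ card (S - T)"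

definition fourier :: "real \<Rightarrow> nat \<Rightarrow> (nat set \<Rightarrow> real) \<Rightarrow> nat set \<Rightarrow> real" where
  "fourier p n f S = (\<Sum>T\<in>Pow {1..n}. mu p n T * f T * walsh p S T)"

definition blockbit :: "nat \<Rightarrow> nat set \<Rightarrow> nat \<Rightarrow> nat \<Rightarrow> nat" where
  "blockbit m y i j = (if (i - 1) * m + j \<in> y then 1 else 0)"

definition Bin :: "nat \<Rightarrow> nat set \<Rightarrow> nat \<Rightarrow> nat" where
  "Bin m y i = (\<Sum>j = 0..m-1. 2 ^ j * blockbit m y i (m - j))"

text \<open>h with t = 1: h(y^i) = 1 iff Bin(y^i) >= 2^m - 1.\<close>
definition hred :: "nat \<Rightarrow> nat set \<Rightarrow> nat \<Rightarrow> bool" where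
  "hred m y i \<longleftrightarrow> Bin m y i \<ge> 2 ^ m - 1"

definition Red :: "nat \<Rightarrow> nat \<Rightarrow> (nat set \<Rightarrow> real) \<Rightarrow> nat set \<Rightarrow> real" where
  "Red m n f y = f {i \<in> {1..n}. hred m y i}"

definition block :: "nat \<Rightarrow> nat set \<Rightarrow> nat \<Rightarrow> nat set" where
  "block m S i = S \<inter> {(i - 1) * m + 1 .. i * m}"

definition Sprime :: "nat \<Rightarrow> nat \<Rightarrow> nat set \<Rightarrow> nat set" where
  "Sprime m n S = {i \<in> {1..n}. card (block m S i) > 0}"

end

theory Submission
  imports Defs
begin
definition blk :: "nat \<Rightarrow> nat \<Rightarrow> nat set" where "blk m i = {(i - 1) * m + 1 .. i * m}"

lemma blk_sub: "i \<in> {1..n} \<Longrightarrow> blk m i \<subseteq> {1..m*n}"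
  unfolding blk_def by (auto simp: mult.commute intro: order_trans[OF _ mult_le_mono2])

lemma blk_disj: "i \<noteq> j \<Longrightarrow> i \<ge> 1 \<Longrightarrow> j \<ge> 1 \<Longrightarrow> blk m i \<inter> blk m j = {}"
proof -
  have *: "blk m i \<inter> blk m j = {}" if "i < j" "i \<ge> 1" for i j
  proof -
    have "i \<le> j - 1" using that by simp
    hence "i * m \<le> (j - 1) * m" by (rule mult_le_mono1)
    have "x \<le> i * m" "x \<ge> (j - 1) * m + 1" if "x \<in> blk m i" "x \<in> blk m j" for x
      using that unfolding blk_def by auto
    show ?thesis
    proof (rule equals0I)
      fix x assume "x \<in> blk m i \<inter> blk m j"
      hence "x \<le> i * m" "x \<ge> (j - 1) * m + 1" using that unfolding blk_def by auto
      with \<open>i * m \<le> (j - 1) * m\<close> show False by linarith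
    qed
  qed
  assume "i \<noteq> j" "i \<ge> 1" "j \<ge> 1"
  thus ?thesis using *[of i j] *[of j i] by (cases "i < j") (auto simp: Int_commute)
qed

lemma blk_union: "m \<ge> 1 \<Longrightarrow> (\<Union>i\<in>{1..n}. blk m i) = {1..m*n}"
proof
  show "(\<Union>i\<in>{1..n}. blk m i) \<subseteq> {1..m*n}" using blk_sub by blast
  assume m: "m \<ge> 1"
  show "{1..m*n} \<subseteq> (\<Union>i\<in>{1..n}. blk m i)"
  proof
    fix j assume j: "j \<in> {1..m*n}"
    define i where "i = (j - 1) div m + 1"
    have a: "(j - 1) div m * m \<le> j - 1" by (metis div_mult_mod_eq le_add1)
    have b: "j - 1 < (j - 1) div m * m + m" using m
      by (metis div_mult_mod_eq add_less_cancel_left mod_less_divisor not_one_le_zero gr0I)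
    have "j - 1 < n * m" using j by (auto simp: mult.commute)
    hence c: "(j - 1) div m < n" by (rule less_mult_imp_div_less)
    have e1: "(i - 1) * m = (j - 1) div m * m" by (simp add: i_def)
    have e2: "i * m = (j - 1) div m * m + m" by (simp add: i_def)
    have j1: "1 \<le> j" using j by simp
    have "(i - 1) * m + 1 \<le> j" using a j1 e1 by linarith
    moreover have "j \<le> i * m" using b j1 e2 by linarith
    ultimately have "j \<in> blk m i" unfolding blk_def by auto
    moreover have "i \<in> {1..n}" using c unfolding i_def by auto
    ultimately show "j \<in> (\<Union>i\<in>{1..n}. blk m i)" by blast
  qed
qed

lemma blk_Suc: "blk m (Suc n) = {m*n+1..m*n+m}" unfolding blk_def by (simp add: algebra_simps)

lemma sum_pow_union:
  assumes "finite A" "finite B" "A \<inter> B = {}"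
  shows "(\<Sum>y\<in>Pow (A \<union> B). F (y \<inter> A) * G (y \<inter> B)) = (\<Sum>a\<in>Pow A. F a) * (\<Sum>b\<in>Pow B. (G b :: real))"
proof -
  have "(\<Sum>a\<in>Pow A. F a) * (\<Sum>b\<in>Pow B. G b) = (\<Sum>(a,b)\<in>Pow A \<times> Pow B. F a * G b)"
    by (simp add: sum_product sum.cartesian_product)
  also have "\<dots> = (\<Sum>y\<in>Pow (A \<union> B). F (y \<inter> A) * G (y \<inter> B))"
  proof -
    have h1: "\<And>a b. a \<subseteq> A \<Longrightarrow> b \<subseteq> B \<Longrightarrow> (a \<union> b) \<inter> A = a" using assms by blast
    have h2: "\<And>a b. a \<subseteq> A \<Longrightarrow> b \<subseteq> B \<Longrightarrow> (a \<union> b) \<inter> B = b" using assms by blast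
    show ?thesis
      apply (rule sum.reindex_bij_witness[where i="\<lambda>y. (y \<inter> A, y \<inter> B)" and j="\<lambda>(a,b). a \<union> b"])
      apply (use assms in \<open>auto simp: h1 h2\<close>)
      done
  qed
  finally show ?thesis by simp
qed

lemma block_factor:
  "(\<Sum>y\<in>Pow {1..m*n}. \<Prod>i\<in>{1..n}. F i (y \<inter> blk m i)) = (\<Prod>i\<in>{1..n}. \<Sum>z\<in>Pow (blk m i). (F i z :: real))"
proof (induction n)
  case 0 then show ?case by simp
next
  case (Suc n)
  have U: "{1..m * Suc n} = {1..m*n} \<union> blk m (Suc n)" unfolding blk_Suc by auto
  have D: "{1..m*n} \<inter> blk m (Suc n) = {}" unfolding blk_Suc by auto
  have "(\<Sum>y\<in>Pow {1..m*Suc n}. \<Prod>i\<in>{1..Suc n}. F i (y \<inter> blk m i))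
      = (\<Sum>y\<in>Pow ({1..m*n} \<union> blk m (Suc n)). (\<lambda>a. \<Prod>i\<in>{1..n}. F i (a \<inter> blk m i)) (y \<inter> {1..m*n})
           * F (Suc n) (y \<inter> blk m (Suc n)))"
  proof (rule sum.cong)
    fix y
    have "\<And>i. i \<in> {1..n} \<Longrightarrow> y \<inter> {1..m*n} \<inter> blk m i = y \<inter> blk m i" using blk_sub by blast
    thus "(\<Prod>i\<in>{1..Suc n}. F i (y \<inter> blk m i)) =
         (\<lambda>a. \<Prod>i\<in>{1..n}. F i (a \<inter> blk m i)) (y \<inter> {1..m*n}) * F (Suc n) (y \<inter> blk m (Suc n))"
      by (simp add: prod.nat_ivl_Suc')
  qed (simp only: U)
  also have "\<dots> = (\<Sum>a\<in>Pow {1..m*n}. \<Prod>i\<in>{1..n}. F i (a \<inter> blk m i)) * (\<Sum>b\<in>Pow (blk m (Suc n)). F (Suc n) b)"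
    by (rule sum_pow_union) (use D in \<open>auto simp: blk_def\<close>)
  also have "\<dots> = (\<Prod>i\<in>{1..Suc n}. \<Sum>z\<in>Pow (blk m i). F i z)"
    using Suc by (simp add: prod.nat_ivl_Suc')
  finally show ?case .
qed

lemma sum_pow_parity:
  assumes "finite B"
  shows "(\<Sum>z\<in>Pow B. (-1::real) ^ card (A \<inter> z)) = (if A \<inter> B = {} then 2 ^ card B else 0)"
  using assms
proof (induction B rule: finite_induct)
  case empty then show ?case by simp
next
  case (insert b B)
  have inj: "inj_on (insert b) (Pow B)"
  proof (rule inj_onI)
    fix x y assume xy: "x \<in> Pow B" "y \<in> Pow B" "insert b x = insert b y"
    hence "b \<notin> x" "b \<notin> y" using insert(2) by auto
    thus "x = y" using xy(3) by (simp add: insert_ident)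
  qed
  have dj: "Pow B \<inter> insert b ` Pow B = {}" using insert(2) by blast
  have "(\<Sum>z\<in>Pow (insert b B). (-1::real) ^ card (A \<inter> z))
      = (\<Sum>z\<in>Pow B. (-1::real) ^ card (A \<inter> z)) + (\<Sum>z\<in>Pow B. (-1::real) ^ card (A \<inter> insert b z))"
    unfolding Pow_insert
    apply (subst sum.union_disjoint)
    using insert(1) dj apply (simp_all)[3]
    apply (subst sum.reindex[OF inj])
    apply (simp add: comp_def)
    done
  also have "(\<Sum>z\<in>Pow B. (-1::real) ^ card (A \<inter> insert b z))
      = (if b \<in> A then -1 else 1) * (\<Sum>z\<in>Pow B. (-1::real) ^ card (A \<inter> z))"
    unfolding sum_distrib_left
  proof (rule sum.cong)
    fix z assume "z \<in> Pow B"
    hence bz: "b \<notin> A \<inter> z" using insert(2) by blast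
    have fin: "finite (A \<inter> z)" using \<open>z \<in> Pow B\<close> insert(1) by (meson PowD finite_Int finite_subset)
    show "(-1::real) ^ card (A \<inter> insert b z) = (if b \<in> A then -1 else 1) * (-1) ^ card (A \<inter> z)"
    proof (cases "b \<in> A")
      case True
      hence "A \<inter> insert b z = insert b (A \<inter> z)" by blast
      thus ?thesis using True bz fin by simp
    next
      case False
      hence "A \<inter> insert b z = A \<inter> z" by blast
      thus ?thesis using False by simp
    qed
  qed simp
  finally show ?case using insert by (auto simp: card_insert_if)
qed

lemma card_blk: "i \<ge> 1 \<Longrightarrow> card (blk m i) = m"
proof -
  assume "i \<ge> 1"
  hence "i * m = (i - 1) * m + m" by (cases i) auto
  thus ?thesis unfolding blk_def by simp
qed

lemma block_sum:
  assumes "i \<ge> 1"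
  shows "(\<Sum>z\<in>Pow (blk m i). (if (blk m i \<subseteq> z) = (i \<in> x) then 1 else 0) * (-1::real) ^ card (S \<inter> z))
    = (if i \<in> x then (-1) ^ card (S \<inter> blk m i)
       else (if S \<inter> blk m i = {} then 2 ^ m else 0) - (-1) ^ card (S \<inter> blk m i))"
proof -
  let ?B = "blk m i"
  have fin: "finite (Pow ?B)" by (simp add: blk_def)
  have d: "(\<Sum>z\<in>Pow ?B. (if ?B \<subseteq> z then (-1::real) ^ card (S \<inter> z) else 0)) = (-1) ^ card (S \<inter> ?B)"
  proof -
    have "(\<Sum>z\<in>Pow ?B. (if ?B \<subseteq> z then (-1::real) ^ card (S \<inter> z) else 0))
        = (\<Sum>z\<in>Pow ?B. (if z = ?B then (-1::real) ^ card (S \<inter> z) else 0))"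
      by (rule sum.cong) auto
    also have "\<dots> = (-1) ^ card (S \<inter> ?B)" using fin by (simp add: sum.delta')
    finally show ?thesis .
  qed
  have tot: "(\<Sum>z\<in>Pow ?B. (-1::real) ^ card (S \<inter> z)) = (if S \<inter> ?B = {} then 2 ^ m else 0)"
    using sum_pow_parity[of ?B S] card_blk[OF assms] by (simp add: blk_def)
  show ?thesis
  proof (cases "i \<in> x")
    case True
    have "(\<Sum>z\<in>Pow ?B. (if (?B \<subseteq> z) = (i \<in> x) then 1 else 0) * (-1::real) ^ card (S \<inter> z))
       = (\<Sum>z\<in>Pow ?B. (if ?B \<subseteq> z then (-1::real) ^ card (S \<inter> z) else 0))"
      by (rule sum.cong) (use True in auto)
    thus ?thesis using d True by simp
  next
    case False
    have "(\<Sum>z\<in>Pow ?B. (if (?B \<subseteq> z) = (i \<in> x) then 1 else 0) * (-1::real) ^ card (S \<inter> z))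
       = (\<Sum>z\<in>Pow ?B. (-1::real) ^ card (S \<inter> z)) - (\<Sum>z\<in>Pow ?B. (if ?B \<subseteq> z then (-1::real) ^ card (S \<inter> z) else 0))"
      unfolding sum_subtractf[symmetric] using False by (intro sum.cong) auto
    thus ?thesis using d tot False by simp
  qed
qed

lemma prod_if_card:
  "finite A \<Longrightarrow> (\<Prod>i\<in>A. if i \<in> X then a else b) = a ^ card (A \<inter> X) * (b::real) ^ card (A - X)"
  by (simp add: prod.If_cases Int_def set_diff_eq)

lemma prod_if_one:
  "finite A \<Longrightarrow> B \<subseteq> A \<Longrightarrow> (\<Prod>i\<in>A. if i \<in> B then g i else 1) = (\<Prod>i\<in>B. (g i :: real))"
  by (simp add: prod.If_cases Int_absorb1 Int_commute)

lemma card_split: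
  assumes "m \<ge> 1" "T \<subseteq> {1..m*n}"
  shows "card T = (\<Sum>i\<in>{1..n}. card (T \<inter> blk m i))"
proof -
  have "T = (\<Union>i\<in>{1..n}. T \<inter> blk m i)" using blk_union[OF assms(1)] assms(2) by blast
  hence "card T = card (\<Union>i\<in>{1..n}. T \<inter> blk m i)" by simp
  also have "\<dots> = (\<Sum>i\<in>{1..n}. card (T \<inter> blk m i))"
  proof (rule card_UN_disjoint)
    show "finite {1..n}" by simp
    show "\<forall>i\<in>{1..n}. finite (T \<inter> blk m i)" by (simp add: blk_def)
    show "\<forall>i\<in>{1..n}. \<forall>j\<in>{1..n}. i \<noteq> j \<longrightarrow> T \<inter> blk m i \<inter> (T \<inter> blk m j) = {}"
    proof (intro ballI impI)
      fix i j assume "i \<in> {1..n}" "j \<in> {1..n}" "i \<noteq> j"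
      hence "blk m i \<inter> blk m j = {}" by (intro blk_disj) auto
      thus "T \<inter> blk m i \<inter> (T \<inter> blk m j) = {}" by blast
    qed
  qed
  finally show ?thesis .
qed


lemma hred_blk:
  assumes "m \<ge> 1" "i \<ge> 1" shows "hred m y i \<longleftrightarrow> blk m i \<subseteq> y"
proof -
  have tot: "(\<Sum>j=0..m-1. (2::nat)^j) = 2^m - 1"
  proof -
    have "{0..m-1} = {0..<m}" using assms by auto
    thus ?thesis by (simp add: sum_power2)
  qed
  have le: "\<And>j. 2^j * blockbit m y i (m - j) \<le> (2::nat)^j" by (simp add: blockbit_def)
  have "hred m y i \<longleftrightarrow> (\<forall>j\<in>{0..m-1}. blockbit m y i (m - j) = 1)"
  proof
    assume h: "hred m y i"
    show "\<forall>j\<in>{0..m-1}. blockbit m y i (m - j) = 1"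
    proof (rule ccontr)
      assume "\<not> ?thesis"
      then obtain j where j: "j \<in> {0..m-1}" "blockbit m y i (m - j) \<noteq> 1" by blast
      hence "2^j * blockbit m y i (m - j) < (2::nat)^j" by (simp add: blockbit_def split: if_splits)
      hence "Bin m y i < 2^m - 1" unfolding Bin_def tot[symmetric]
        using j le by (intro sum_strict_mono_ex1) auto
      thus False using h by (simp add: hred_def)
    qed
  next
    assume "\<forall>j\<in>{0..m-1}. blockbit m y i (m - j) = 1"
    hence "Bin m y i = 2^m - 1" unfolding Bin_def tot[symmetric] by (intro sum.cong) auto
    thus "hred m y i" by (simp add: hred_def)
  qed
  also have "\<dots> \<longleftrightarrow> blk m i \<subseteq> y"
  proof
    assume a: "\<forall>j\<in>{0..m-1}. blockbit m y i (m - j) = 1"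
    show "blk m i \<subseteq> y"
    proof
      fix x assume "x \<in> blk m i"
      hence x1: "(i - 1) * m + 1 \<le> x" "x \<le> i * m" by (simp_all add: blk_def)
      have im: "i * m = (i - 1) * m + m" using assms(2) by (cases i) auto
      define k where "k = x - (i - 1) * m"
      have kx: "x = (i - 1) * m + k" using x1(1) unfolding k_def by simp
      have "1 \<le> k" "k \<le> m" using x1 im unfolding kx by linarith+
      hence k: "k \<in> {1..m}" "x = (i - 1) * m + k" using kx by auto
      hence "m - k \<in> {0..m-1}" by auto
      with a have "blockbit m y i (m - (m - k)) = 1" by blast
      moreover have "m - (m - k) = k" using k(1) by simp
      ultimately have "blockbit m y i k = 1" by simp
      hence "(i - 1) * m + k \<in> y" unfolding blockbit_def by (metis zero_neq_one)
      with k(2) show "x \<in> y" by simp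
    qed
  next
    assume "blk m i \<subseteq> y"
    show "\<forall>j\<in>{0..m-1}. blockbit m y i (m - j) = 1"
    proof
      fix j assume j: "j \<in> {0..m-1}"
      have im: "i * m = (i - 1) * m + m" using assms(2) by (cases i) auto
      have "1 \<le> m - j" "m - j \<le> m" using j assms(1) by auto
      hence "(i - 1) * m + (m - j) \<in> blk m i" unfolding blk_def using im by simp
      with \<open>blk m i \<subseteq> y\<close> show "blockbit m y i (m - j) = 1" by (auto simp: blockbit_def)
    qed
  qed
  finally show ?thesis .
qed

lemma per_i:
  fixes p q a s :: real
  assumes p: "p = (1/2)^m" and q: "q * a = -1" "q * q * (1 - p) = p" and s: "e \<Longrightarrow> s = 1"
  shows "(if \<not> e then -q else 1) * s * (if ix then p else 1 - p) * (if \<not> e then (if ix then a else q) else 1)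
       = (1/2)^m * (if ix then s else (if e then 2^m else 0) - s)"
proof -
  have pm: "(1/2::real)^m * 2^m = 1" by (simp add: power_mult_distrib[symmetric])
  show ?thesis
  proof (cases e)
    case True
    thus ?thesis using s p pm by (auto simp: algebra_simps)
  next
    case False
    show ?thesis
    proof (cases ix)
      case True
      have "-q * s * p * a = -(q*a) * s * p" by (simp add: algebra_simps)
      thus ?thesis using False True q p by simp
    next
      case f2: False
      have "-q * s * (1 - p) * q = - (q * q * (1 - p)) * s" by (simp add: algebra_simps)
      also have "\<dots> = - p * s" using q(2) by simp
      finally have h: "-q * s * (1 - p) * q = - p * s" .
      show ?thesis using False f2 h unfolding p by simp
    qed
  qed
qed

theorem proposition2p1:
  fixes m n :: nat and p :: real and f :: "nat set \<Rightarrow> real" and S :: "nat set"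
  assumes "m \<ge> 1" and "p = 1 / 2 ^ m" and "S \<subseteq> {1..m * n}"
  shows "fourier (1/2) (m * n) (Red m n f) S
       = (- sqrt (p / (1 - p))) ^ card (Sprime m n S) * (-1) ^ card S * fourier p n f (Sprime m n S)"
proof -
  have m: "m \<ge> 1" using assms(1) .
  have p2: "p = (1/2)^m" using assms(2) by (simp add: power_divide)
  have "(2::real)^m \<ge> 2^1" using m by (intro power_increasing) auto
  hence p0: "p > 0" and p1: "p < 1" using assms(2) by auto
  define q where "q = sqrt (p / (1 - p))"
  define a where "a = - sqrt ((1 - p) / p)"
  have qa: "q * a = -1" unfolding q_def a_def using p0 p1
    by (simp add: real_sqrt_mult[symmetric])
  have qq: "q * q * (1 - p) = p" unfolding q_def using p0 p1 by simp
  define H where "H y = {i\<in>{1..n}. blk m i \<subseteq> y}" for y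
  have Red_eq: "Red m n f y = f (H y)" for y unfolding Red_def H_def by (auto simp: hred_blk[OF m] intro!: arg_cong[where f=f])
  define c where "c i x = (if i \<in> x then (-1::real) ^ card (S \<inter> blk m i)
       else (if S \<inter> blk m i = {} then 2 ^ m else 0) - (-1) ^ card (S \<inter> blk m i))" for i x
  define sg where "sg y = (-1::real) ^ card (S \<inter> y)" for y
  define S' where "S' = Sprime m n S"
  have S'_eq: "S' = {i\<in>{1..n}. S \<inter> blk m i \<noteq> {}}"
  proof -
    have "card (block m S i) > 0 \<longleftrightarrow> S \<inter> blk m i \<noteq> {}" for i
      unfolding block_def blk_def by (simp add: card_gt_0_iff)
    thus ?thesis unfolding S'_def Sprime_def by simp
  qed
  have S'sub: "S' \<subseteq> {1..n}" unfolding S'_eq by auto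
  have L1: "fourier (1/2) (m*n) (Red m n f) S = (\<Sum>y\<in>Pow {1..m*n}. (1/2)^(m*n) * f (H y) * sg y)"
    unfolding fourier_def
  proof (rule sum.cong)
    fix y assume y: "y \<in> Pow {1..m*n}"
    hence "card y \<le> m * n" by (metis PowD card_atLeastAtMost card_mono diff_Suc_1 finite_atLeastAtMost)
    hence "mu (1/2) (m*n) y = (1/2)^(m*n)" unfolding mu_def by (simp add: power_add[symmetric])
    moreover have "walsh (1/2) S y = sg y" unfolding walsh_def sg_def by simp
    ultimately show "mu (1/2) (m*n) y * Red m n f y * walsh (1/2) S y = (1/2)^(m*n) * f (H y) * sg y"
      by (simp add: Red_eq)
  qed simp
  have L2: "(\<Sum>y\<in>Pow {1..m*n}. (1/2)^(m*n) * f (H y) * sg y)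
     = (\<Sum>x\<in>Pow {1..n}. f x * ((1/2)^(m*n) * (\<Sum>y\<in>Pow {1..m*n}. (if H y = x then 1 else 0) * sg y)))"
  proof -
    have "(\<Sum>x\<in>Pow {1..n}. f x * ((1/2)^(m*n) * (\<Sum>y\<in>Pow {1..m*n}. (if H y = x then 1 else 0) * sg y)))
        = (\<Sum>x\<in>Pow {1..n}. \<Sum>y\<in>Pow {1..m*n}. (if H y = x then f x * (1/2)^(m*n) * sg y else 0))"
      unfolding sum_distrib_left by (intro sum.cong refl) auto
    also have "\<dots> = (\<Sum>y\<in>Pow {1..m*n}. \<Sum>x\<in>Pow {1..n}. (if H y = x then f x * (1/2)^(m*n) * sg y else 0))"
      by (rule sum.swap)
    also have "\<dots> = (\<Sum>y\<in>Pow {1..m*n}. (1/2)^(m*n) * f (H y) * sg y)"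
    proof (rule sum.cong)
      fix y
      have "H y \<in> Pow {1..n}" unfolding H_def by auto
      thus "(\<Sum>x\<in>Pow {1..n}. (if H y = x then f x * (1/2)^(m*n) * sg y else 0)) = (1/2)^(m*n) * f (H y) * sg y"
        by (simp add: sum.delta)
    qed simp
    finally show ?thesis by simp
  qed
  define G where "G x i z = (if (blk m i \<subseteq> z) = (i \<in> x) then 1 else 0) * (-1::real) ^ card (S \<inter> z)" for x i z
  have L3: "(1/2)^(m*n) * (\<Sum>y\<in>Pow {1..m*n}. (if H y = x then 1 else 0) * sg y) = (\<Prod>i\<in>{1..n}. (1/2)^m * c i x)"
    if x: "x \<in> Pow {1..n}" for x
  proof -
    have "(\<Sum>y\<in>Pow {1..m*n}. (if H y = x then 1 else 0) * sg y) = (\<Sum>y\<in>Pow {1..m*n}. \<Prod>i\<in>{1..n}. G x i (y \<inter> blk m i))"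
    proof (rule sum.cong)
      fix y assume y: "y \<in> Pow {1..m*n}"
      have "(\<Prod>i\<in>{1..n}. G x i (y \<inter> blk m i))
          = (\<Prod>i\<in>{1..n}. (if (blk m i \<subseteq> y) = (i \<in> x) then 1 else 0)) * (\<Prod>i\<in>{1..n}. (-1::real) ^ card (S \<inter> y \<inter> blk m i))"
        unfolding G_def prod.distrib[symmetric] by (intro prod.cong) (auto simp: Int_assoc)
      also have "(\<Prod>i\<in>{1..n}. (-1::real) ^ card (S \<inter> y \<inter> blk m i)) = sg y"
      proof -
        have cs: "card (S \<inter> y) = (\<Sum>i\<in>{1..n}. card (S \<inter> y \<inter> blk m i))"
          using card_split[OF m, of "S \<inter> y" n] assms(3) by blast
        show ?thesis unfolding sg_def power_sum[symmetric] cs ..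
      qed
      also have "(\<Prod>i\<in>{1..n}. (if (blk m i \<subseteq> y) = (i \<in> x) then 1 else 0)) = (if H y = x then (1::real) else 0)"
      proof (cases "\<forall>i\<in>{1..n}. (blk m i \<subseteq> y) = (i \<in> x)")
        case True
        hence "H y = x" unfolding H_def using x by auto
        thus ?thesis using True by simp
      next
        case False
        hence "H y \<noteq> x" unfolding H_def using x by auto
        moreover have "(\<Prod>i\<in>{1..n}. (if (blk m i \<subseteq> y) = (i \<in> x) then 1 else 0)) = (0::real)"
          using False by (intro prod_zero) auto
        ultimately show ?thesis by simp
      qed
      finally show "(if H y = x then 1 else 0) * sg y = (\<Prod>i\<in>{1..n}. G x i (y \<inter> blk m i))" by simp
    qed simp
    also have "\<dots> = (\<Prod>i\<in>{1..n}. \<Sum>z\<in>Pow (blk m i). G x i z)" by (rule block_factor)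
    also have "\<dots> = (\<Prod>i\<in>{1..n}. c i x)"
      unfolding G_def c_def by (intro prod.cong refl block_sum) auto
    finally have "(\<Sum>y\<in>Pow {1..m*n}. (if H y = x then 1 else 0) * sg y) = (\<Prod>i\<in>{1..n}. c i x)" .
    moreover have "(1/2::real)^(m*n) = (\<Prod>i\<in>{1..n}. (1/2)^m)" by (simp add: power_mult)
    ultimately show ?thesis by (simp add: prod.distrib)
  qed
  define C where "C = (- q) ^ card S' * (-1::real) ^ card S"
  have R: "C * (mu p n x * walsh p S' x) = (\<Prod>i\<in>{1..n}. (1/2)^m * c i x)" if x: "x \<in> Pow {1..n}" for x
  proof -
    have e1: "(- q) ^ card S' = (\<Prod>i\<in>{1..n}. if i \<in> S' then -q else 1)"
      using prod_if_one[of "{1..n}" S' "\<lambda>_. -q"] S'sub by simp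
    have e2: "(-1::real) ^ card S = (\<Prod>i\<in>{1..n}. (-1) ^ card (S \<inter> blk m i))"
      unfolding power_sum[symmetric] using card_split[OF m assms(3)] by simp
    have e3: "mu p n x = (\<Prod>i\<in>{1..n}. if i \<in> x then p else 1 - p)"
    proof -
      have "{1..n} \<inter> x = x" using x by auto
      moreover have "card ({1..n} - x) = n - card x" using x by (simp add: card_Diff_subset finite_subset)
      ultimately show ?thesis unfolding mu_def by (simp add: prod_if_card)
    qed
    have e4: "walsh p S' x = (\<Prod>i\<in>{1..n}. if i \<in> S' then (if i \<in> x then a else q) else 1)"
    proof -
      have fS: "finite S'" using S'sub finite_subset by blast
      have "(\<Prod>i\<in>{1..n}. if i \<in> S' then (if i \<in> x then a else q) else 1) = (\<Prod>i\<in>S'. if i \<in> x then a else q)"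
        using prod_if_one[of "{1..n}" S'] S'sub by simp
      also have "\<dots> = a ^ card (S' \<inter> x) * q ^ card (S' - x)" using prod_if_card[OF fS] by simp
      finally show ?thesis unfolding walsh_def a_def q_def by simp
    qed
    have "C * (mu p n x * walsh p S' x) = (\<Prod>i\<in>{1..n}. (if i \<in> S' then -q else 1) * (-1) ^ card (S \<inter> blk m i)
        * (if i \<in> x then p else 1 - p) * (if i \<in> S' then (if i \<in> x then a else q) else 1))"
      unfolding C_def e1 e2 e3 e4 prod.distrib by (simp add: mult.assoc)
    also have "\<dots> = (\<Prod>i\<in>{1..n}. (1/2)^m * c i x)"
    proof (rule prod.cong)
      fix i assume i: "i \<in> {1..n}"
      have iS: "i \<in> S' \<longleftrightarrow> \<not> (S \<inter> blk m i = {})" using i unfolding S'_eq by auto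
      show "(if i \<in> S' then -q else 1) * (-1) ^ card (S \<inter> blk m i)
        * (if i \<in> x then p else 1 - p) * (if i \<in> S' then (if i \<in> x then a else q) else 1) = (1/2)^m * c i x"
        unfolding iS c_def by (rule per_i[OF p2 qa qq]) simp
    qed simp
    finally show ?thesis .
  qed
  have "fourier (1/2) (m*n) (Red m n f) S = (\<Sum>x\<in>Pow {1..n}. f x * (\<Prod>i\<in>{1..n}. (1/2)^m * c i x))"
    using L1 L2 L3 by simp
  also have "\<dots> = (\<Sum>x\<in>Pow {1..n}. C * (mu p n x * f x * walsh p S' x))"
  proof (rule sum.cong)
    fix x assume x: "x \<in> Pow {1..n}"
    show "f x * (\<Prod>i\<in>{1..n}. (1/2)^m * c i x) = C * (mu p n x * f x * walsh p S' x)"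
      unfolding R[OF x, symmetric] by (simp add: algebra_simps)
  qed simp
  also have "\<dots> = C * fourier p n f S'" unfolding fourier_def sum_distrib_left ..
  finally show ?thesis unfolding C_def q_def S'_def by simp
qed

end
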